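(* Let $\mathcal{P}\subset\mathbb{R}^3$ be a pointsymmetric convex polyhedron with radius $1$ and let $S\in\mathcal{P}$. Let $\bar\theta_1,\bar\varphi_1,\bar\theta_2,\bar\varphi_2,\bar\alpha\in\mathbb{R}$, $\varepsilon>0$, and let $w\in\mathbb{R}^2$ be a unit vector. Write $\overline{M_1}=M(\bar\theta_1,\bar\varphi_1)$, $\overline{M_2}=M(\bar\theta_2,\bar\varphi_2)$, $\overline{M_k}^\theta=M^\theta(\bar\theta_k,\bar\varphi_k)$, $\overline{M_k}^\varphi=M^\varphi(\bar\theta_k,\bar\varphi_k)$ for $k=1,2$, and set \[ G=\langle R(\bar\alpha)\overline{M_1}S,w\rangle-\varepsilon\big(|\langle R'(\bar\alpha)\overline{M_1}S,w\rangle|+|\langle R(\bar\alpha)\overline{M_1}^\theta S,w\rangle|+|\langle R(\bar\alpha)\overline{M_1}^\varphi S,w\rangle|\big)-\tfrac{9}{2}\varepsilon^2, \] \[ H_P=\langle \overline{M_2}P,w\rangle+\varepsilon\big(|\langle\overline{M_2}^\theta P,w\rangle|+|\langle\overline{M_2}^\varphi P,w\rangle|\big)+2\varepsilon^2\quad (P\in\mathcal{P}). \] If $G>\max_{P\in\mathcal{P}}H_P$, then there is no $(\theta_1,\varphi_1,\theta_2,\varphi_2,\alpha)$ with $|\theta_k-\bar\theta_k|,|\varphi_k-\bar\varphi_k|,|\alpha-\bar\alpha|\le\varepsilon$ ($k=1,2$) such that $R(\alpha)M(\theta_1,\varphi_1)\mathcal{P}\subset\operatorname{int}\operatorname{conv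}(M(\theta_2,\varphi_2)\mathcal{P})$.
   Context: $R(\alpha)=\begin{pmatrix}\cos\alpha&-\sin\alpha\\ \sin\alpha&\cos\alpha\end{pmatrix}$, $R'(\alpha)=\frac{d}{d\alpha}R(\alpha)$; $M(\theta,\varphi)=\begin{pmatrix}-\sin\theta&\cos\theta&0\\ -\cos\theta\cos\varphi&-\sin\theta\cos\varphi&\sin\varphi\end{pmatrix}$, $M^\theta=\partial_\theta M$, $M^\varphi=\partial_\varphi M$. A polyhedron is a finite non-degenerate set of points of $\mathbb{R}^3$ in convex position; pointsymmetric means $\mathcal{P}=-\mathcal{P}$; radius $1$ means $\|P\|\le1$ for all $P\in\mathcal{P}$ with equality for some $P$. Matrices act on point sets elementwise. *)

theory Defs
  imports "HOL-Analysis.Analysis"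
begin

definition rotR :: "real \<Rightarrow> real^2^2" where
  "rotR a = vector [vector [cos a, - sin a], vector [sin a, cos a]]"

definition rotR' :: "real \<Rightarrow> real^2^2" where
  "rotR' a = (\<chi> i j. deriv (\<lambda>t. rotR t $ i $ j) a)"

definition projM :: "real \<Rightarrow> real \<Rightarrow> real^3^2" where
  "projM th ph = vector [vector [- sin th, cos th, 0],
                         vector [- cos th * cos ph, - sin th * cos ph, sin ph]]"

definition projM_th :: "real \<Rightarrow> real \<Rightarrow> real^3^2" where
  "projM_th th ph = (\<chi> i j. deriv (\<lambda>t. projM t ph $ i $ j) th)"

definition projM_ph :: "real \<Rightarrow> real \<Rightarrow> real^3^2" where
  "projM_ph th ph = (\<chi> i j. deriv (\<lambda>t. projM th t $ i $ j) ph)"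

definition polyhedron :: "(real^3) set \<Rightarrow> bool" where
  "polyhedron P \<longleftrightarrow> finite P \<and> aff_dim P = 3 \<and>
     (\<forall>p\<in>P. p \<notin> convex hull (P - {p}))"

definition pointsymmetric :: "(real^3) set \<Rightarrow> bool" where
  "pointsymmetric P \<longleftrightarrow> uminus ` P = P"

definition has_radius_one :: "(real^3) set \<Rightarrow> bool" where
  "has_radius_one P \<longleftrightarrow> (\<forall>p\<in>P. norm p \<le> 1) \<and> (\<exists>p\<in>P. norm p = 1)"

end

theory Submission
  imports Defs
begin

lemma taylor2_bound:
  fixes g g1 g2 :: "real \<Rightarrow> real"
  assumes d1: "\<And>t. (g has_real_derivative g1 t) (at t)"
    and d2: "\<And>t. (g1 has_real_derivative g2 t) (at t)"
    and b: "\<And>t. \<bar>g2 t\<bar> \<le> 1"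
  shows "\<bar>g x - g x0 - g1 x0 * (x - x0)\<bar> \<le> (x - x0)\<^sup>2 / 2"
proof (cases "x = x0")
  case True then show ?thesis by simp
next
  case False
  define diff where "diff = (\<lambda>m::nat. if m = 0 then g else if m = 1 then g1 else g2)"
  have "\<exists>t. (if x < x0 then x < t \<and> t < x0 else x0 < t \<and> t < x) \<and>
    g x = (\<Sum>m<2. (diff m x0 / fact m) * (x - x0)^m) + (diff 2 t / fact 2) * (x - x0)^2"
    apply (rule Taylor[where a="min x x0" and b="max x x0"])
    using False d1 d2 by (auto simp: diff_def less_2_cases_iff)
  then obtain t where "g x = g x0 + g1 x0 * (x - x0) + g2 t / 2 * (x - x0)^2"
    by (auto simp: diff_def numeral_2_eq_2)
  then have "\<bar>g x - g x0 - g1 x0 * (x - x0)\<bar> = \<bar>g2 t\<bar> * (x - x0)^2 / 2"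
    by (simp add: abs_mult)
  also have "\<dots> \<le> (x - x0)\<^sup>2 / 2"
    using b[of t] by (simp add: mult_left_le_one_le divide_right_mono mult_le_cancel_right1)
  finally show ?thesis .
qed

lemma mvt_bound:
  fixes g g1 :: "real \<Rightarrow> real"
  assumes d1: "\<And>t. (g has_real_derivative g1 t) (at t)"
    and b: "\<And>t. \<bar>g1 t\<bar> \<le> 1"
  shows "\<bar>g x - g x0\<bar> \<le> \<bar>x - x0\<bar>"
proof -
  have *: "\<bar>g b - g a\<bar> \<le> \<bar>b - a\<bar>" if ab: "a < b" for a b
  proof -
    obtain z where "g b - g a = (b - a) * g1 z"
      using MVT2[OF ab, of g g1] d1 by blast
    then show ?thesis using b[of z] by (simp add: abs_mult mult_right_le_one_le)
  qed
  show ?thesis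
    using *[of x x0] *[of x0 x] by (cases "x < x0"; cases "x0 < x") (auto simp: abs_minus_commute)
qed

lemma cs_bound:
  fixes y1 y2 c1 c2 :: real
  assumes "y1\<^sup>2 + y2\<^sup>2 \<le> 1" "c1\<^sup>2 + c2\<^sup>2 = 1"
  shows "\<bar>y1 * c1 + y2 * c2\<bar> \<le> 1"
proof -
  have "(y1 * c1 + y2 * c2)\<^sup>2 + (y1 * c2 - y2 * c1)\<^sup>2 = (y1\<^sup>2 + y2\<^sup>2) * (c1\<^sup>2 + c2\<^sup>2)"
    by (simp add: power2_eq_square algebra_simps)
  also have "\<dots> = y1\<^sup>2 + y2\<^sup>2" using assms(2) by simp
  finally have e: "(y1 * c1 + y2 * c2)\<^sup>2 + (y1 * c2 - y2 * c1)\<^sup>2 = y1\<^sup>2 + y2\<^sup>2" .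
  moreover have "0 \<le> (y1 * c2 - y2 * c1)\<^sup>2" by simp
  then have "(y1 * c1 + y2 * c2)\<^sup>2 \<le> 1" using assms e by linarith
  then show ?thesis by (simp add: abs_square_le_1)
qed

locale tay =
  fixes s1 s2 s3 w1 w2 :: real
  assumes S: "s1\<^sup>2 + s2\<^sup>2 + s3\<^sup>2 \<le> 1" and W: "w1\<^sup>2 + w2\<^sup>2 = 1"
begin

definition "p th = s1 * cos th + s2 * sin th"
definition "q th = - s1 * sin th + s2 * cos th"
definition "v th ph = - cos ph * p th + sin ph * s3"
definition "n th ph = sin ph * p th + cos ph * s3"
definition "c1 a = cos a * w1 + sin a * w2"
definition "c2 a = - sin a * w1 + cos a * w2"
definition "F a th ph = q th * c1 a + v th ph * c2 a"
definition "Fa a th ph = q th * c2 a - v th ph * c1 a"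
definition "Ft a th ph = - p th * c1 a - cos ph * q th * c2 a"
definition "Fp a th ph = n th ph * c2 a"
definition "Fat a th ph = - p th * c2 a + cos ph * q th * c1 a"
definition "Fap a th ph = - n th ph * c1 a"
definition "Ftt a th ph = - q th * c1 a + cos ph * p th * c2 a"
definition "Ftp a th ph = sin ph * q th * c2 a"
definition "Fpp a th ph = - v th ph * c2 a"

lemma pq: "(p th)\<^sup>2 + (q th)\<^sup>2 = s1\<^sup>2 + s2\<^sup>2"
  using sin_cos_squared_add[of th] unfolding p_def q_def by algebra

lemma vn: "(v th ph)\<^sup>2 + (n th ph)\<^sup>2 = (p th)\<^sup>2 + s3\<^sup>2"
  using sin_cos_squared_add[of ph] unfolding v_def n_def by algebra

lemma cc: "(c1 a)\<^sup>2 + (c2 a)\<^sup>2 = 1"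
  using sin_cos_squared_add[of a] W unfolding c1_def c2_def by algebra

lemma sq_facts:
  "(p th)\<^sup>2 + (q th)\<^sup>2 + s3\<^sup>2 \<le> 1"
  "(q th)\<^sup>2 + (v th ph)\<^sup>2 \<le> 1"
  "(n th ph)\<^sup>2 \<le> 1"
  "(v th ph)\<^sup>2 \<le> 1"
  "(q th)\<^sup>2 \<le> 1" "(p th)\<^sup>2 \<le> 1"
  using pq[of th] vn[of th ph] S
  by (smt (verit) zero_le_power2)+

lemma cphi: fixes ph x :: real shows "(cos ph * x)\<^sup>2 \<le> x\<^sup>2" "(sin ph * x)\<^sup>2 \<le> x\<^sup>2"
proof -
  have "(cos ph)\<^sup>2 \<le> 1" using sin_cos_squared_add[of ph] by (smt (verit) zero_le_power2)
  moreover have "(sin ph)\<^sup>2 \<le> 1" using sin_cos_squared_add[of ph] by (smt (verit) zero_le_power2)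
  ultimately show "(cos ph * x)\<^sup>2 \<le> x\<^sup>2" "(sin ph * x)\<^sup>2 \<le> x\<^sup>2"
    by (simp_all add: power_mult_distrib mult_left_le_one_le)
qed

lemma bnd:
  "\<bar>F a th ph\<bar> \<le> 1" "\<bar>Fat a th ph\<bar> \<le> 1" "\<bar>Fap a th ph\<bar> \<le> 1"
  "\<bar>Ftt a th ph\<bar> \<le> 1" "\<bar>Ftp a th ph\<bar> \<le> 1" "\<bar>Fpp a th ph\<bar> \<le> 1"
proof -
  note sf = sq_facts(1)[of th] sq_facts(2)[of th ph] sq_facts(3)[of th ph] sq_facts(4)[of th ph] sq_facts(5)[of th] and c = cc[of a]
  show "\<bar>F a th ph\<bar> \<le> 1" unfolding F_def by (rule cs_bound[OF sf(2) c])
  have hh: "(- p th)\<^sup>2 + (cos ph * q th)\<^sup>2 \<le> 1" using sf(1) cphi[of ph "q th"]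
    by (smt (verit) power2_minus zero_le_power2)
  have c': "(c2 a)\<^sup>2 + (c1 a)\<^sup>2 = 1" using c by simp
  from cs_bound[OF hh c'] show "\<bar>Fat a th ph\<bar> \<le> 1" unfolding Fat_def by (simp add: algebra_simps)
  have "(- n th ph)\<^sup>2 + 0\<^sup>2 \<le> 1" using sf(3) by simp
  from cs_bound[OF this c] show "\<bar>Fap a th ph\<bar> \<le> 1" unfolding Fap_def by simp
  have "(- q th)\<^sup>2 + (cos ph * p th)\<^sup>2 \<le> 1" using sf(1) cphi[of ph "p th"]
    by (smt (verit) power2_minus zero_le_power2)
  from cs_bound[OF this c] show "\<bar>Ftt a th ph\<bar> \<le> 1" unfolding Ftt_def by (simp add: algebra_simps)
  have "0\<^sup>2 + (sin ph * q th)\<^sup>2 \<le> 1" using sf(5) cphi(2)[of ph "q th"] by simp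
  from cs_bound[OF this c] show "\<bar>Ftp a th ph\<bar> \<le> 1" unfolding Ftp_def by simp
  have "0\<^sup>2 + (- v th ph)\<^sup>2 \<le> 1" using sf(4) by simp
  from cs_bound[OF this c] show "\<bar>Fpp a th ph\<bar> \<le> 1" unfolding Fpp_def by simp
qed

lemmas defs = F_def Fa_def Ft_def Fp_def Fat_def Fap_def Ftt_def Ftp_def Fpp_def
  p_def q_def v_def n_def c1_def c2_def

lemma ders:
  "((\<lambda>t. F t th ph) has_real_derivative Fa a th ph) (at a)"
  "((\<lambda>t. Fa t th ph) has_real_derivative - F a th ph) (at a)"
  "((\<lambda>t. Fa a t ph) has_real_derivative Fat a th ph) (at th)"
  "((\<lambda>t. Fa a th t) has_real_derivative Fap a th ph) (at ph)"
  "((\<lambda>t. F a t ph) has_real_derivative Ft a th ph) (at th)"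
  "((\<lambda>t. Ft a t ph) has_real_derivative Ftt a th ph) (at th)"
  "((\<lambda>t. Ft a th t) has_real_derivative Ftp a th ph) (at ph)"
  "((\<lambda>t. F a th t) has_real_derivative Fp a th ph) (at ph)"
  "((\<lambda>t. Fp a th t) has_real_derivative Fpp a th ph) (at ph)"
  unfolding defs
  by (rule derivative_eq_intros refl | simp add: algebra_simps)+


lemma lin_bd: fixes x d e :: real assumes "\<bar>d\<bar> \<le> e" shows "x * d \<ge> - e * \<bar>x\<bar>" "x * d \<le> e * \<bar>x\<bar>"
proof -
  have "\<bar>x * d\<bar> \<le> e * \<bar>x\<bar>" using assms by (simp add: abs_mult mult_right_mono mult.commute)
  then show "x * d \<ge> - e * \<bar>x\<bar>" "x * d \<le> e * \<bar>x\<bar>" by linarith+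
qed

lemma prod_bd: fixes x d e c :: real assumes "\<bar>d\<bar> \<le> e" "\<bar>x\<bar> \<le> c" "0 \<le> c"
  shows "\<bar>x * d\<bar> \<le> c * e"
  using assms by (simp add: abs_mult mult_mono')

lemma sq_bd: fixes d e :: real assumes "\<bar>d\<bar> \<le> e" shows "d\<^sup>2 \<le> e\<^sup>2"
  using assms by (metis abs_ge_zero order_trans power2_abs power_mono)

lemma lower:
  assumes ea: "\<bar>a - ab\<bar> \<le> e" and et: "\<bar>th - thb\<bar> \<le> e" and ep: "\<bar>ph - phb\<bar> \<le> e"
  shows "F a th ph \<ge> F ab thb phb - e * (\<bar>Fa ab thb phb\<bar> + \<bar>Ft ab thb phb\<bar> + \<bar>Fp ab thb phb\<bar>) - 9/2 * e\<^sup>2"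
proof -
  have e0: "0 \<le> e" using ea by linarith
  have T1: "\<bar>F a th ph - F ab th ph - Fa ab th ph * (a - ab)\<bar> \<le> (a - ab)\<^sup>2 / 2"
    by (rule taylor2_bound[of _ "\<lambda>t. Fa t th ph" "\<lambda>t. - F t th ph"]) (use ders bnd in auto)
  have T2: "\<bar>Fa ab th ph - Fa ab thb ph\<bar> \<le> \<bar>th - thb\<bar>"
    by (rule mvt_bound[of _ "\<lambda>t. Fat ab t ph"]) (use ders bnd in auto)
  have T3: "\<bar>Fa ab thb ph - Fa ab thb phb\<bar> \<le> \<bar>ph - phb\<bar>"
    by (rule mvt_bound[of _ "\<lambda>t. Fap ab thb t"]) (use ders bnd in auto)
  have T4: "\<bar>F ab th ph - F ab thb ph - Ft ab thb ph * (th - thb)\<bar> \<le> (th - thb)\<^sup>2 / 2"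
    by (rule taylor2_bound[of _ "\<lambda>t. Ft ab t ph" "\<lambda>t. Ftt ab t ph"]) (use ders bnd in auto)
  have T5: "\<bar>Ft ab thb ph - Ft ab thb phb\<bar> \<le> \<bar>ph - phb\<bar>"
    by (rule mvt_bound[of _ "\<lambda>t. Ftp ab thb t"]) (use ders bnd in auto)
  have T6: "\<bar>F ab thb ph - F ab thb phb - Fp ab thb phb * (ph - phb)\<bar> \<le> (ph - phb)\<^sup>2 / 2"
    by (rule taylor2_bound[of _ "\<lambda>t. Fp ab thb t" "\<lambda>t. Fpp ab thb t"]) (use ders bnd in auto)
  have A1: "\<bar>(Fa ab th ph - Fa ab thb phb) * (a - ab)\<bar> \<le> (2 * e) * e"
    by (rule prod_bd) (use T2 T3 ea et ep e0 in auto)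
  have A2: "\<bar>(Ft ab thb ph - Ft ab thb phb) * (th - thb)\<bar> \<le> e * e"
    by (rule prod_bd) (use T5 et ep e0 in auto)
  have L1: "Fa ab thb phb * (a - ab) \<ge> - e * \<bar>Fa ab thb phb\<bar>" using lin_bd[OF ea] by simp
  have L2: "Ft ab thb phb * (th - thb) \<ge> - e * \<bar>Ft ab thb phb\<bar>" using lin_bd[OF et] by simp
  have L3: "Fp ab thb phb * (ph - phb) \<ge> - e * \<bar>Fp ab thb phb\<bar>" using lin_bd[OF ep] by simp
  have Q: "(a - ab)\<^sup>2 \<le> e\<^sup>2" "(th - thb)\<^sup>2 \<le> e\<^sup>2" "(ph - phb)\<^sup>2 \<le> e\<^sup>2"
    using sq_bd ea et ep by auto
  have ee: "e * e = e\<^sup>2" by (simp add: power2_eq_square)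
  show ?thesis using T1[unfolded abs_le_iff] T4[unfolded abs_le_iff] T6[unfolded abs_le_iff]
    A1[unfolded abs_le_iff] A2[unfolded abs_le_iff] L1 L2 L3 Q ee
    by (simp only: distrib_left left_diff_distrib mult.assoc ee) linarith
qed

lemma upper:
  assumes et: "\<bar>th - thb\<bar> \<le> e" and ep: "\<bar>ph - phb\<bar> \<le> e"
  shows "F a th ph \<le> F a thb phb + e * (\<bar>Ft a thb phb\<bar> + \<bar>Fp a thb phb\<bar>) + 2 * e\<^sup>2"
proof -
  have e0: "0 \<le> e" using et by linarith
  have T4: "\<bar>F a th ph - F a thb ph - Ft a thb ph * (th - thb)\<bar> \<le> (th - thb)\<^sup>2 / 2"
    by (rule taylor2_bound[of _ "\<lambda>t. Ft a t ph" "\<lambda>t. Ftt a t ph"]) (use ders bnd in auto)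
  have T5: "\<bar>Ft a thb ph - Ft a thb phb\<bar> \<le> \<bar>ph - phb\<bar>"
    by (rule mvt_bound[of _ "\<lambda>t. Ftp a thb t"]) (use ders bnd in auto)
  have T6: "\<bar>F a thb ph - F a thb phb - Fp a thb phb * (ph - phb)\<bar> \<le> (ph - phb)\<^sup>2 / 2"
    by (rule taylor2_bound[of _ "\<lambda>t. Fp a thb t" "\<lambda>t. Fpp a thb t"]) (use ders bnd in auto)
  have A2: "\<bar>(Ft a thb ph - Ft a thb phb) * (th - thb)\<bar> \<le> e * e"
    by (rule prod_bd) (use T5 et ep e0 in auto)
  have L2: "Ft a thb phb * (th - thb) \<le> e * \<bar>Ft a thb phb\<bar>" using lin_bd[OF et] by simp
  have L3: "Fp a thb phb * (ph - phb) \<le> e * \<bar>Fp a thb phb\<bar>" using lin_bd[OF ep] by simp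
  have Q: "(th - thb)\<^sup>2 \<le> e\<^sup>2" "(ph - phb)\<^sup>2 \<le> e\<^sup>2"
    using sq_bd et ep by auto
  have ee: "e * e = e\<^sup>2" by (simp add: power2_eq_square)
  show ?thesis using T4[unfolded abs_le_iff] T6[unfolded abs_le_iff]
    A2[unfolded abs_le_iff] L2 L3 Q ee
    by (simp only: distrib_left left_diff_distrib mult.assoc ee) linarith
qed

end

lemma rotR'_eq: "rotR' a = vector [vector [- sin a, - cos a], vector [cos a, - sin a]]"
  unfolding rotR'_def rotR_def
  by (simp add: vec_eq_iff forall_2)
  (intro conjI; rule DERIV_imp_deriv; auto intro!: derivative_eq_intros)

lemma projM_th_eq: "projM_th th ph = vector [vector [- cos th, - sin th, 0],
                         vector [sin th * cos ph, - cos th * cos ph, 0]]"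
  unfolding projM_th_def projM_def
  by (simp add: vec_eq_iff forall_2 forall_3)
  (intro conjI; rule DERIV_imp_deriv; auto intro!: derivative_eq_intros)

lemma projM_ph_eq: "projM_ph th ph = vector [vector [0, 0, 0],
                         vector [cos th * sin ph, sin th * sin ph, cos ph]]"
  unfolding projM_ph_def projM_def
  by (simp add: vec_eq_iff forall_2 forall_3)
  (intro conjI; rule DERIV_imp_deriv; auto intro!: derivative_eq_intros)

context tay begin
lemma conv:
  assumes "x$1 = s1" "x$2 = s2" "x$3 = s3" "w$1 = w1" "w$2 = w2"
  shows
  "(rotR a *v (projM th ph *v x)) \<bullet> w = F a th ph"
  "(rotR' a *v (projM th ph *v x)) \<bullet> w = Fa a th ph"
  "(rotR a *v (projM_th th ph *v x)) \<bullet> w = Ft a th ph"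
  "(rotR a *v (projM_ph th ph *v x)) \<bullet> w = Fp a th ph"
  "(projM th ph *v x) \<bullet> w = F 0 th ph"
  "(projM_th th ph *v x) \<bullet> w = Ft 0 th ph"
  "(projM_ph th ph *v x) \<bullet> w = Fp 0 th ph"
  unfolding rotR'_eq projM_th_eq projM_ph_eq rotR_def projM_def defs
  by (simp_all add: assms inner_vec_def matrix_vector_mult_def sum_2 sum_3 algebra_simps)
end


lemma interior_hull_lt:
  fixes g :: "'a \<Rightarrow> 'b::euclidean_space"
  assumes "finite P" "P \<noteq> {}" "w \<noteq> 0" "y \<in> interior (convex hull (g ` P))"
  shows "\<exists>Q\<in>P. y \<bullet> w < g Q \<bullet> w"
proof -
  define m where "m = Max ((\<lambda>Q. g Q \<bullet> w) ` P)"
  have "m \<in> (\<lambda>Q. g Q \<bullet> w) ` P" unfolding m_def using assms(1,2) by (intro Max_in) auto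
  then obtain Q where Q: "Q \<in> P" "m = g Q \<bullet> w" by auto
  have "convex hull (g ` P) \<subseteq> {z. w \<bullet> z \<le> m}"
  proof (rule hull_minimal)
    show "g ` P \<subseteq> {z. w \<bullet> z \<le> m}" using assms(1) by (auto simp: m_def inner_commute)
    show "convex {z. w \<bullet> z \<le> m}" by (rule convex_halfspace_le)
  qed
  moreover obtain e where e: "e > 0" "ball y e \<subseteq> convex hull (g ` P)"
    using assms(4) by (auto simp: mem_interior)
  moreover have "y + (e / 2 / norm w) *\<^sub>R w \<in> ball y e"
    using e(1) assms(3) by (simp add: dist_norm)
  ultimately have "w \<bullet> (y + (e / 2 / norm w) *\<^sub>R w) \<le> m" by auto
  then have "y \<bullet> w + e / 2 * norm w \<le> m"
    using assms(3) by (simp add: inner_add_right inner_commute dot_square_norm power2_eq_square)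
  moreover have "0 < e / 2 * norm w" using e(1) assms(3) by simp
  ultimately have "y \<bullet> w < g Q \<bullet> w" using Q by linarith
  then show ?thesis using Q(1) by blast
qed

theorem theorem4p1:
  fixes P :: "(real^3) set" and S :: "real^3" and w :: "real^2"
    and th1b ph1b th2b ph2b ab eps :: real
  assumes "polyhedron P" and "pointsymmetric P" and "has_radius_one P"
    and "S \<in> P"
    and "eps > 0" and "norm w = 1"
    and "(rotR ab *v (projM th1b ph1b *v S)) \<bullet> w
          - eps * (\<bar>(rotR' ab *v (projM th1b ph1b *v S)) \<bullet> w\<bar>
                 + \<bar>(rotR ab *v (projM_th th1b ph1b *v S)) \<bullet> w\<bar>
                 + \<bar>(rotR ab *v (projM_ph th1b ph1b *v S)) \<bullet> w\<bar>)
          - 9 / 2 * eps\<^sup>2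
        > Max ((\<lambda>Q. (projM th2b ph2b *v Q) \<bullet> w
                 + eps * (\<bar>(projM_th th2b ph2b *v Q) \<bullet> w\<bar>
                        + \<bar>(projM_ph th2b ph2b *v Q) \<bullet> w\<bar>)
                 + 2 * eps\<^sup>2) ` P)"
  shows "\<not> (\<exists>th1 ph1 th2 ph2 a.
             \<bar>th1 - th1b\<bar> \<le> eps \<and> \<bar>ph1 - ph1b\<bar> \<le> eps \<and>
             \<bar>th2 - th2b\<bar> \<le> eps \<and> \<bar>ph2 - ph2b\<bar> \<le> eps \<and>
             \<bar>a - ab\<bar> \<le> eps \<and>
             (\<lambda>x. rotR a *v (projM th1 ph1 *v x)) ` P
               \<subseteq> interior (convex hull ((\<lambda>x. projM th2 ph2 *v x) ` P)))"
proof
  assume "\<exists>th1 ph1 th2 ph2 a.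
             \<bar>th1 - th1b\<bar> \<le> eps \<and> \<bar>ph1 - ph1b\<bar> \<le> eps \<and>
             \<bar>th2 - th2b\<bar> \<le> eps \<and> \<bar>ph2 - ph2b\<bar> \<le> eps \<and>
             \<bar>a - ab\<bar> \<le> eps \<and>
             (\<lambda>x. rotR a *v (projM th1 ph1 *v x)) ` P
               \<subseteq> interior (convex hull ((\<lambda>x. projM th2 ph2 *v x) ` P))"
  then obtain th1 ph1 th2 ph2 a where
    b: "\<bar>th1 - th1b\<bar> \<le> eps" "\<bar>ph1 - ph1b\<bar> \<le> eps"
       "\<bar>th2 - th2b\<bar> \<le> eps" "\<bar>ph2 - ph2b\<bar> \<le> eps" "\<bar>a - ab\<bar> \<le> eps"
    and sub: "(\<lambda>x. rotR a *v (projM th1 ph1 *v x)) ` P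
               \<subseteq> interior (convex hull ((\<lambda>x. projM th2 ph2 *v x) ` P))"
    by blast
  have fin: "finite P" using assms(1) by (simp add: polyhedron_def)
  have ne: "P \<noteq> {}" using assms(4) by auto
  have w0: "w \<noteq> 0" using assms(6) by auto
  have nrm: "x$1 ^ 2 + x$2 ^ 2 + x$3 ^ 2 \<le> 1" if "x \<in> P" for x
  proof -
    have "norm x \<le> 1" using assms(3) that by (simp add: has_radius_one_def)
    then have "(norm x)\<^sup>2 \<le> 1" by (simp add: abs_square_le_1)
    moreover have "x \<bullet> x = (norm x)\<^sup>2" by (rule dot_square_norm)
    moreover have "x \<bullet> x = x$1 ^ 2 + x$2 ^ 2 + x$3 ^ 2" by (simp add: inner_vec_def sum_3 power2_eq_square)
    ultimately show ?thesis by simp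
  qed
  have nw: "w$1 ^ 2 + w$2 ^ 2 = 1"
  proof -
    have "w \<bullet> w = (norm w)\<^sup>2" by (rule dot_square_norm)
    moreover have "w \<bullet> w = w$1 ^ 2 + w$2 ^ 2" by (simp add: inner_vec_def sum_2 power2_eq_square)
    ultimately show ?thesis using assms(6) by simp
  qed
  have "rotR a *v (projM th1 ph1 *v S) \<in> interior (convex hull ((\<lambda>x. projM th2 ph2 *v x) ` P))"
    using sub assms(4) by blast
  from interior_hull_lt[OF fin ne w0 this] obtain Q where Q: "Q \<in> P"
    "(rotR a *v (projM th1 ph1 *v S)) \<bullet> w < (projM th2 ph2 *v Q) \<bullet> w" by blast
  interpret s: tay "S$1" "S$2" "S$3" "w$1" "w$2"
    using nrm[OF assms(4)] nw by unfold_locales auto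
  interpret qq: tay "Q$1" "Q$2" "Q$3" "w$1" "w$2"
    using nrm[OF Q(1)] nw by unfold_locales auto
  note cs = s.conv[OF refl refl refl refl refl]
  note cq = qq.conv[OF refl refl refl refl refl]
  have L: "s.F a th1 ph1 \<ge> s.F ab th1b ph1b - eps * (\<bar>s.Fa ab th1b ph1b\<bar> + \<bar>s.Ft ab th1b ph1b\<bar> + \<bar>s.Fp ab th1b ph1b\<bar>) - 9/2 * eps\<^sup>2"
    by (rule s.lower[OF b(5) b(1) b(2)])
  have U: "qq.F 0 th2 ph2 \<le> qq.F 0 th2b ph2b + eps * (\<bar>qq.Ft 0 th2b ph2b\<bar> + \<bar>qq.Fp 0 th2b ph2b\<bar>) + 2 * eps\<^sup>2"
    by (rule qq.upper[OF b(3) b(4)])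
  have M: "(projM th2b ph2b *v Q) \<bullet> w
                 + eps * (\<bar>(projM_th th2b ph2b *v Q) \<bullet> w\<bar>
                        + \<bar>(projM_ph th2b ph2b *v Q) \<bullet> w\<bar>)
                 + 2 * eps\<^sup>2 \<le> Max ((\<lambda>Q. (projM th2b ph2b *v Q) \<bullet> w
                 + eps * (\<bar>(projM_th th2b ph2b *v Q) \<bullet> w\<bar>
                        + \<bar>(projM_ph th2b ph2b *v Q) \<bullet> w\<bar>)
                 + 2 * eps\<^sup>2) ` P)"
    using fin Q(1) by (intro Max_ge) auto
  show False using assms(7) M L U Q(2) unfolding cs cq by linarith
qed
end
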